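(* Let $1\le t\le n$. The minimal prime ideals of $I_t(L_n)$ are exactly the ideals $\mathfrak p_F=(x_i: i\in F)$ with $F\in C_{n,t}$, where $C_{n,t}$ is the set of subsets $F=\{i_1,\ldots,i_r\}\subseteq[n]$, $i_1<\cdots<i_r$, satisfying: (1) $1\le i_1\le t$; (2) $i_2>t$; (3) $1\le i_{j+1}-i_j\le t$ for $j=1,\ldots,r-1$; (4) $i_{j+2}-i_j>t$ for $j=1,\ldots,r-2$; (5) $i_{r-1}<n-t+1$; (6) $n-t+1\le i_r\le n$ (conditions referring to indices not in $\{1,\ldots,r\}$ are vacuous). Equivalently, $C_{n,t}$ is the set of minimal vertex covers of $\Delta_{n,t}$.
   Context: $K$ is a field, $S=K[x_1,\ldots,x_n]$, $I_t(L_n)=(u_1,\ldots,u_{n-t+1})$ with $u_i=x_ix_{i+1}\cdots x_{i+t-1}$. $\Delta_{n,t}$ is the simplicial complex on $[n]$ with facets $\{i,\ldots,i+t-1\}$, $i=1,\ldots,n-t+1$; a vertex cover is a subset of $[n]$ meeting every facet, minimal if no proper subset is a vertex cover. *)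

theory Defs
  imports "HOL-Library.Poly_Mapping" "HOL-Algebra.Ideal"
begin

type_synonym 'a mpoly = "(nat \<Rightarrow>\<^sub>0 nat) \<Rightarrow>\<^sub>0 'a"

definition Var :: "nat \<Rightarrow> 'a::comm_ring_1 mpoly" where
  "Var i = Poly_Mapping.single (Poly_Mapping.single i 1) 1"

definition polyring :: "nat \<Rightarrow> ('a::comm_ring_1 mpoly) ring" where
  "polyring n = \<lparr>carrier = {p :: 'a mpoly. \<forall>m\<in>Poly_Mapping.keys p. Poly_Mapping.keys m \<subseteq> {1..n}},
                 monoid.mult = (*), one = 1, zero = 0, add = (+)\<rparr>"

definition path_gen :: "nat \<Rightarrow> nat \<Rightarrow> 'a::comm_ring_1 mpoly" where
  "path_gen t i = (\<Prod>k\<in>{i..i+t-1}. Var k)"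

definition path_ideal :: "nat \<Rightarrow> nat \<Rightarrow> 'a::comm_ring_1 mpoly set" where
  "path_ideal n t = genideal (polyring n) {path_gen t i | i. 1 \<le> i \<and> i \<le> n - t + 1}"

definition var_ideal :: "nat \<Rightarrow> nat set \<Rightarrow> 'a::comm_ring_1 mpoly set" where
  "var_ideal n F = genideal (polyring n) (Var ` F)"

definition minimal_prime :: "('b, 'c) ring_scheme \<Rightarrow> 'b set \<Rightarrow> 'b set \<Rightarrow> bool" where
  "minimal_prime R I P \<longleftrightarrow> primeideal P R \<and> I \<subseteq> P \<and>
     (\<forall>Q. primeideal Q R \<and> I \<subseteq> Q \<and> Q \<subseteq> P \<longrightarrow> Q = P)"

text \<open>The set C_{n,t}; xs ! j is i_{j+1} (0-based list of the sorted elements).\<close>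
definition Cnt :: "nat \<Rightarrow> nat \<Rightarrow> nat set set" where
  "Cnt n t = {F. F \<subseteq> {1..n} \<and> F \<noteq> {} \<and>
     (let xs = sorted_list_of_set F; r = length xs in
        1 \<le> xs ! 0 \<and> xs ! 0 \<le> t \<and>
        (2 \<le> r \<longrightarrow> xs ! 1 > t) \<and>
        (\<forall>j. j + 1 < r \<longrightarrow> 1 \<le> xs ! (j+1) - xs ! j \<and> xs ! (j+1) - xs ! j \<le> t) \<and>
        (\<forall>j. j + 2 < r \<longrightarrow> xs ! (j+2) - xs ! j > t) \<and>
        (2 \<le> r \<longrightarrow> xs ! (r - 2) < n - t + 1) \<and>
        n - t + 1 \<le> xs ! (r - 1) \<and> xs ! (r - 1) \<le> n)}"

text \<open>Vertex covers of Delta_{n,t} (facets {i..i+t-1}, i = 1..n-t+1).\<close>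
definition vertex_cover :: "nat \<Rightarrow> nat \<Rightarrow> nat set \<Rightarrow> bool" where
  "vertex_cover n t C \<longleftrightarrow> C \<subseteq> {1..n} \<and>
     (\<forall>i. 1 \<le> i \<and> i \<le> n - t + 1 \<longrightarrow> C \<inter> {i..i+t-1} \<noteq> {})"

definition minimal_vertex_cover :: "nat \<Rightarrow> nat \<Rightarrow> nat set \<Rightarrow> bool" where
  "minimal_vertex_cover n t C \<longleftrightarrow> vertex_cover n t C \<and>
     (\<forall>D. D \<subset> C \<longrightarrow> \<not> vertex_cover n t D)"

end

theory Submission
  imports Defs
begin


locale sl =
  fixes F :: "nat set" and xs and n t :: nat
  assumes fin: "finite F" and ne: "F \<noteq> {}" and Fn: "F \<subseteq> {1..n}"
    and xs: "xs = sorted_list_of_set F" and t: "1 \<le> t" "t \<le> n"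
begin

abbreviation "r \<equiv> length xs"

lemma set_xs: "set xs = F" using xs fin by simp
lemma sw: "sorted_wrt (<) xs" using xs by simp
lemma r_pos: "0 < r" using set_xs ne by auto
lemma mono: "j < k \<Longrightarrow> k < r \<Longrightarrow> xs!j < xs!k" using sorted_wrt_nth_less[OF sw] by blast
lemma mono_le: "j \<le> k \<Longrightarrow> k < r \<Longrightarrow> xs!j \<le> xs!k"
proof -
  assume "j \<le> k" "k < r"
  then consider "j = k" | "j < k" by linarith
  then show ?thesis
  proof cases
    case 2 then show ?thesis using mono[of j k] \<open>k < r\<close> by simp
  qed simp
qed
lemma less_iff: "j < r \<Longrightarrow> k < r \<Longrightarrow> xs!j < xs!k \<longleftrightarrow> j < k"
proof -
  assume a: "j < r" "k < r"
  consider "j < k" | "j = k" | "k < j" by linarith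
  then show ?thesis
  proof cases
    case 1 then show ?thesis using mono[of j k] a by simp
  next
    case 3 then show ?thesis using mono[of k j] a by simp
  qed simp
qed
lemma inF: "j < r \<Longrightarrow> xs!j \<in> F" using set_xs nth_mem by blast
lemma inF_rng: "j < r \<Longrightarrow> 1 \<le> xs!j \<and> xs!j \<le> n" using inF[of j] Fn by auto
lemma obtF: "x \<in> F \<Longrightarrow> \<exists>j<r. xs!j = x" using set_xs by (metis in_set_conv_nth)

lemma cov_iff: "vertex_cover n t F \<longleftrightarrow>
   xs!0 \<le> t \<and> (\<forall>j. j+1<r \<longrightarrow> xs!(j+1) \<le> xs!j + t) \<and> n < xs!(r-1) + t"
proof
  assume c: "vertex_cover n t F"
  have win: "\<exists>f\<in>F. i \<le> f \<and> f \<le> i+t-1" if "1 \<le> i" "i + t \<le> n + 1" for i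
  proof -
    have "F \<inter> {i..i+t-1} \<noteq> {}" using c that t by (auto simp: vertex_cover_def)
    then show ?thesis by auto
  qed
  have a: "xs!0 \<le> t"
  proof -
    obtain f where "f \<in> F" "f \<le> t" using win[of 1] t by auto
    then obtain k where "k < r" "xs!k = f" using obtF by blast
    then show ?thesis using mono_le[of 0 k] \<open>f \<le> t\<close> by auto
  qed
  have b: "xs!(j+1) \<le> xs!j + t" if j: "j+1 < r" for j
  proof (rule ccontr)
    assume "\<not> ?thesis"
    then have g: "xs!j + t < xs!(j+1)" by simp
    have "xs!(j+1) \<le> n" using inF_rng j by blast
    then obtain f where f: "f \<in> F" "xs!j + 1 \<le> f" "f \<le> xs!j + 1 + t - 1" using win[of "xs!j+1"] g by auto
    then obtain k where k: "k < r" "xs!k = f" using obtF by blast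
    then have "j < k" using less_iff[of j k] f j by auto
    then have "xs!(j+1) \<le> xs!k" using mono_le k by auto
    then show False using f k g by auto
  qed
  have d: "n < xs!(r-1) + t"
  proof -
    obtain f where "f \<in> F" "n - t + 1 \<le> f" using win[of "n-t+1"] t by auto
    then obtain k where "k < r" "xs!k = f" using obtF by blast
    then have "f \<le> xs!(r-1)" using mono_le[of k "r-1"] by auto
    then show ?thesis using \<open>n - t + 1 \<le> f\<close> t by auto
  qed
  show "xs!0 \<le> t \<and> (\<forall>j. j+1<r \<longrightarrow> xs!(j+1) \<le> xs!j + t) \<and> n < xs!(r-1) + t"
    using a b d by blast
next
  assume h: "xs!0 \<le> t \<and> (\<forall>j. j+1<r \<longrightarrow> xs!(j+1) \<le> xs!j + t) \<and> n < xs!(r-1) + t"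
  show "vertex_cover n t F" unfolding vertex_cover_def
  proof (intro conjI allI impI)
    show "F \<subseteq> {1..n}" by (rule Fn)
    fix i assume i: "1 \<le> i \<and> i \<le> n - t + 1"
    have ex: "\<exists>k. k < r \<and> i \<le> xs!k" using h i r_pos t by (intro exI[of _ "r-1"]) auto
    define j where "j = (LEAST k. k < r \<and> i \<le> xs!k)"
    have j: "j < r" "i \<le> xs!j" using LeastI_ex[OF ex] unfolding j_def by auto
    have "xs!j \<le> i + t - 1"
    proof (cases j)
      case 0 then show ?thesis using h i by auto
    next
      case (Suc j')
      then have "\<not> (j' < r \<and> i \<le> xs!j')" using not_less_Least[of j' "\<lambda>k. k < r \<and> i \<le> xs!k"] j_def by auto
      then have "xs!j' < i" using j Suc by auto
      moreover have "xs!j \<le> xs!j' + t" using h j Suc by auto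
      ultimately show ?thesis by auto
    qed
    then have "xs!j \<in> F \<inter> {i..i+t-1}" using j inF by auto
    then show "F \<inter> {i..i+t-1} \<noteq> {}" by blast
  qed
qed

definition lo where "lo j = (if j = 0 then 1 else xs!(j-1) + 1)"
definition hi where "hi j = (if j = r - 1 then n + 1 else xs!(j+1))"

lemma rem_iff:
  assumes c: "vertex_cover n t F" and j: "j < r"
  shows "(\<exists>i. 1 \<le> i \<and> i + t \<le> n + 1 \<and> F \<inter> {i..i+t-1} \<subseteq> {xs!j}) \<longleftrightarrow> lo j + t \<le> hi j"
proof
  assume "\<exists>i. 1 \<le> i \<and> i + t \<le> n + 1 \<and> F \<inter> {i..i+t-1} \<subseteq> {xs!j}"
  then obtain i where i: "1 \<le> i" "i + t \<le> n + 1" "F \<inter> {i..i+t-1} \<subseteq> {xs!j}" by blast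
  have ne: "F \<inter> {i..i+t-1} \<noteq> {}" using c i t by (auto simp: vertex_cover_def)
  have l: "lo j \<le> i"
  proof (cases "j = 0")
    case True then show ?thesis using i by (simp add: lo_def)
  next
    case False
    have lt: "xs!(j-1) < xs!j" using mono[of "j-1" j] j False by auto
    have mem: "xs!(j-1) \<in> F" using inF j by auto
    show ?thesis
    proof (rule ccontr)
      assume "\<not> ?thesis"
      then have "i \<le> xs!(j-1)" using False by (simp add: lo_def)
      show False
      proof (cases "xs!(j-1) \<le> i+t-1")
        case True
        then have "xs!(j-1) \<in> F \<inter> {i..i+t-1}" using mem \<open>i \<le> xs!(j-1)\<close> by auto
        then show False using i(3) lt by auto
      next
        case False
        obtain f where "f \<in> F \<inter> {i..i+t-1}" using ne by blast
        then have "f = xs!j" "f \<le> i+t-1" using i(3) by auto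
        then show False using False lt by auto
      qed
    qed
  qed
  have h: "i + t \<le> hi j"
  proof (cases "j = r - 1")
    case True then show ?thesis using i by (simp add: hi_def)
  next
    case False
    then have j1: "j + 1 < r" using j by auto
    have lt: "xs!j < xs!(j+1)" using mono[of j "j+1"] j1 by auto
    have mem: "xs!(j+1) \<in> F" using inF j1 by auto
    show ?thesis
    proof (rule ccontr)
      assume "\<not> ?thesis"
      then have "xs!(j+1) \<le> i + t - 1" using False by (simp add: hi_def)
      show False
      proof (cases "i \<le> xs!(j+1)")
        case True
        then have "xs!(j+1) \<in> F \<inter> {i..i+t-1}" using mem \<open>xs!(j+1) \<le> i+t-1\<close> by auto
        then show False using i(3) lt by auto
      next
        case False
        obtain f where "f \<in> F \<inter> {i..i+t-1}" using ne by blast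
        then have "f = xs!j" "i \<le> f" using i(3) by auto
        then show False using False lt by auto
      qed
    qed
  qed
  show "lo j + t \<le> hi j" using l h by auto
next
  assume a: "lo j + t \<le> hi j"
  have hn: "hi j \<le> n + 1"
  proof (cases "j = r - 1")
    case False then have "j + 1 < r" using j by auto
    then show ?thesis using inF_rng[of "j+1"] False by (simp add: hi_def)
  qed (simp add: hi_def)
  have "F \<inter> {lo j..lo j+t-1} \<subseteq> {xs!j}"
  proof
    fix f assume f: "f \<in> F \<inter> {lo j..lo j+t-1}"
    then obtain k where k: "k < r" "xs!k = f" using obtF by blast
    have "\<not> k < j"
    proof
      assume "k < j"
      then have "xs!k \<le> xs!(j-1)" using mono_le[of k "j-1"] j by auto
      then show False using f k \<open>k < j\<close> by (auto simp: lo_def)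
    qed
    moreover have "\<not> j < k"
    proof
      assume "j < k"
      then have "xs!(j+1) \<le> xs!k" using mono_le[of "j+1" k] k by auto
      moreover have "j \<noteq> r - 1" using \<open>j < k\<close> k by auto
      ultimately show False using f k a t by (auto simp: hi_def)
    qed
    ultimately show "f \<in> {xs!j}" using k by auto
  qed
  moreover have "1 \<le> lo j" by (simp add: lo_def)
  ultimately show "\<exists>i. 1 \<le> i \<and> i + t \<le> n + 1 \<and> F \<inter> {i..i+t-1} \<subseteq> {xs!j}"
    using a hn by (intro exI[of _ "lo j"]) auto
qed

lemma min_iff: "minimal_vertex_cover n t F \<longleftrightarrow> vertex_cover n t F \<and>
   (\<forall>x\<in>F. \<exists>i. 1 \<le> i \<and> i + t \<le> n + 1 \<and> F \<inter> {i..i+t-1} \<subseteq> {x})"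
proof
  assume m: "minimal_vertex_cover n t F"
  then have c: "vertex_cover n t F" by (simp add: minimal_vertex_cover_def)
  have "\<exists>i. 1 \<le> i \<and> i + t \<le> n + 1 \<and> F \<inter> {i..i+t-1} \<subseteq> {x}" if x: "x \<in> F" for x
  proof -
    have "F - {x} \<subset> F" using x by auto
    then have "\<not> vertex_cover n t (F - {x})" using m by (simp add: minimal_vertex_cover_def)
    moreover have "F - {x} \<subseteq> {1..n}" using Fn by auto
    ultimately obtain i where i: "1 \<le> i" "i \<le> n - t + 1" "(F - {x}) \<inter> {i..i+t-1} = {}"
      by (auto simp: vertex_cover_def)
    then show ?thesis using t by (intro exI[of _ i]) auto
  qed
  then show "vertex_cover n t F \<and> (\<forall>x\<in>F. \<exists>i. 1 \<le> i \<and> i + t \<le> n + 1 \<and> F \<inter> {i..i+t-1} \<subseteq> {x})"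
    using c by blast
next
  assume h: "vertex_cover n t F \<and> (\<forall>x\<in>F. \<exists>i. 1 \<le> i \<and> i + t \<le> n + 1 \<and> F \<inter> {i..i+t-1} \<subseteq> {x})"
  have "\<not> vertex_cover n t D" if D: "D \<subset> F" for D
  proof
    assume cD: "vertex_cover n t D"
    obtain x where x: "x \<in> F" "x \<notin> D" using D by blast
    then obtain i where i: "1 \<le> i" "i + t \<le> n + 1" "F \<inter> {i..i+t-1} \<subseteq> {x}" using h by blast
    then have "D \<inter> {i..i+t-1} \<noteq> {}" using cD t by (auto simp: vertex_cover_def)
    then obtain y where "y \<in> D" "y \<in> {i..i+t-1}" by blast
    then have "y = x" using i(3) D by blast
    then show False using x \<open>y \<in> D\<close> by simp
  qed
  then show "minimal_vertex_cover n t F" using h by (simp add: minimal_vertex_cover_def)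
qed

lemma min_iff2: "minimal_vertex_cover n t F \<longleftrightarrow> vertex_cover n t F \<and> (\<forall>j<r. lo j + t \<le> hi j)"
proof -
  have "(\<forall>x\<in>F. \<exists>i. 1 \<le> i \<and> i + t \<le> n + 1 \<and> F \<inter> {i..i+t-1} \<subseteq> {x}) \<longleftrightarrow>
        (\<forall>j<r. \<exists>i. 1 \<le> i \<and> i + t \<le> n + 1 \<and> F \<inter> {i..i+t-1} \<subseteq> {xs!j})"
  proof
    assume H: "\<forall>x\<in>F. \<exists>i. 1 \<le> i \<and> i + t \<le> n + 1 \<and> F \<inter> {i..i+t-1} \<subseteq> {x}"
    show "\<forall>j<r. \<exists>i. 1 \<le> i \<and> i + t \<le> n + 1 \<and> F \<inter> {i..i+t-1} \<subseteq> {xs!j}"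
    proof (intro allI impI)
      fix j assume "j < r" then have "xs!j \<in> F" by (rule inF)
      then show "\<exists>i. 1 \<le> i \<and> i + t \<le> n + 1 \<and> F \<inter> {i..i+t-1} \<subseteq> {xs!j}" using H by blast
    qed
  next
    assume H: "\<forall>j<r. \<exists>i. 1 \<le> i \<and> i + t \<le> n + 1 \<and> F \<inter> {i..i+t-1} \<subseteq> {xs!j}"
    show "\<forall>x\<in>F. \<exists>i. 1 \<le> i \<and> i + t \<le> n + 1 \<and> F \<inter> {i..i+t-1} \<subseteq> {x}"
    proof
      fix x assume "x \<in> F"
      then obtain j where "j < r" "xs!j = x" using obtF by blast
      then show "\<exists>i. 1 \<le> i \<and> i + t \<le> n + 1 \<and> F \<inter> {i..i+t-1} \<subseteq> {x}" using H by blast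
    qed
  qed
  then show ?thesis using min_iff rem_iff by auto
qed

lemma rem_conds: "((2 \<le> r \<longrightarrow> t < xs!1) \<and> (\<forall>j. j+2<r \<longrightarrow> t < xs!(j+2) - xs!j) \<and> (2 \<le> r \<longrightarrow> xs!(r-2) < n-t+1))
   \<longleftrightarrow> (\<forall>j<r. lo j + t \<le> hi j)"
proof
  assume h: "(2 \<le> r \<longrightarrow> t < xs!1) \<and> (\<forall>j. j+2<r \<longrightarrow> t < xs!(j+2) - xs!j) \<and> (2 \<le> r \<longrightarrow> xs!(r-2) < n-t+1)"
  show "\<forall>j<r. lo j + t \<le> hi j"
  proof (intro allI impI)
    fix j assume j: "j < r"
    show "lo j + t \<le> hi j"
    proof (cases "j = 0")
      case True
      show ?thesis
      proof (cases "r = 1")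
        case True then show ?thesis using \<open>j = 0\<close> t by (simp add: lo_def hi_def)
      next
        case False
        then have "0 \<noteq> r - 1" "2 \<le> r" using j r_pos by auto
        then show ?thesis using \<open>j = 0\<close> h by (simp add: lo_def hi_def)
      qed
    next
      case False
      show ?thesis
      proof (cases "j = r - 1")
        case True
        then have "r - 2 = j - 1" "2 \<le> r" using False j by auto
        moreover have "xs!(r-2) < n-t+1" using h \<open>2 \<le> r\<close> by blast
        ultimately have "xs!(j-1) < n-t+1" by simp
        then have "xs!(j-1) + t \<le> n" using t by linarith
        then show ?thesis using True False by (simp add: lo_def hi_def)
      next
        case False2: False
        have "(j-1)+2 < r" "(j-1)+2 = j+1" using False False2 j by auto
        then have "t < xs!(j+1) - xs!(j-1)" using h by metis
        then show ?thesis using False False2 by (simp add: lo_def hi_def)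
      qed
    qed
  qed
next
  assume h: "\<forall>j<r. lo j + t \<le> hi j"
  have c: "t < xs!1" if "2 \<le> r"
  proof -
    have "0 \<noteq> r - 1" "xs \<noteq> []" using that by auto
    then show ?thesis using h[rule_format, of 0] by (simp add: lo_def hi_def)
  qed
  have e: "t < xs!(j+2) - xs!j" if "j+2 < r" for j
  proof -
    have "lo (j+1) + t \<le> hi (j+1)" using h that by simp
    moreover have "j + 1 \<noteq> r - 1" using that by simp
    ultimately show ?thesis by (simp add: lo_def hi_def)
  qed
  have f: "xs!(r-2) < n-t+1" if "2 \<le> r"
  proof -
    have "lo (r-1) + t \<le> hi (r-1)" using h that by simp
    moreover have "r - 1 \<noteq> 0" "r - 1 - 1 = r - 2" using that by auto
    ultimately show ?thesis using t by (simp add: lo_def hi_def)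
  qed
  show "(2 \<le> r \<longrightarrow> t < xs!1) \<and> (\<forall>j. j+2<r \<longrightarrow> t < xs!(j+2) - xs!j) \<and> (2 \<le> r \<longrightarrow> xs!(r-2) < n-t+1)"
    using c e f by blast
qed

lemma Cnt_iff: "F \<in> Cnt n t \<longleftrightarrow> minimal_vertex_cover n t F"
proof -
  have d: "(\<forall>j. j + 1 < r \<longrightarrow> 1 \<le> xs ! (j+1) - xs ! j \<and> xs ! (j+1) - xs ! j \<le> t)
     \<longleftrightarrow> (\<forall>j. j+1<r \<longrightarrow> xs!(j+1) \<le> xs!j + t)"
  proof -
    have "(1 \<le> xs ! (j+1) - xs ! j \<and> xs ! (j+1) - xs ! j \<le> t) \<longleftrightarrow> xs!(j+1) \<le> xs!j + t"
      if "j+1 < r" for j using mono[of j "j+1"] that by arith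
    then show ?thesis by blast
  qed
  have g: "(n - t + 1 \<le> xs ! (r - 1) \<and> xs ! (r - 1) \<le> n) \<longleftrightarrow> n < xs!(r-1) + t"
    using inF_rng[of "r-1"] r_pos t by auto
  have z: "1 \<le> xs!0" using inF_rng[of 0] r_pos by auto
  have "F \<in> Cnt n t \<longleftrightarrow>
     (xs ! 0 \<le> t \<and> (2 \<le> r \<longrightarrow> xs ! 1 > t) \<and>
        (\<forall>j. j + 1 < r \<longrightarrow> 1 \<le> xs ! (j+1) - xs ! j \<and> xs ! (j+1) - xs ! j \<le> t) \<and>
        (\<forall>j. j + 2 < r \<longrightarrow> xs ! (j+2) - xs ! j > t) \<and>
        (2 \<le> r \<longrightarrow> xs ! (r - 2) < n - t + 1) \<and>
        n - t + 1 \<le> xs ! (r - 1) \<and> xs ! (r - 1) \<le> n)"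
  proof -
    have triv: "\<And>X. (F \<subseteq> {1..n} \<and> F \<noteq> {} \<and> 1 \<le> xs!0 \<and> X) = X" using Fn ne z by simp
    show ?thesis unfolding Cnt_def mem_Collect_eq xs[symmetric] Let_def triv by (rule refl)
  qed
  also have "\<dots> \<longleftrightarrow> vertex_cover n t F \<and> (\<forall>j<r. lo j + t \<le> hi j)"
    unfolding cov_iff rem_conds[symmetric] d g by blast
  also have "\<dots> \<longleftrightarrow> minimal_vertex_cover n t F" using min_iff2 by simp
  finally show ?thesis .
qed

end

lemma Cnt_eq:
  assumes t: "1 \<le> t" "t \<le> n"
  shows "Cnt n t = {F. minimal_vertex_cover n t F}"
proof (rule Set.set_eqI, rule iffI)
  fix F assume F: "F \<in> Cnt n t"
  then have "F \<subseteq> {1..n}" "F \<noteq> {}" by (auto simp: Cnt_def)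
  moreover have "finite F" using calculation(1) by (rule finite_subset) simp
  ultimately interpret sl F "sorted_list_of_set F" n t using t by unfold_locales auto
  show "F \<in> {F. minimal_vertex_cover n t F}" using F Cnt_iff by simp
next
  fix F assume F: "F \<in> {F. minimal_vertex_cover n t F}"
  then have F: "minimal_vertex_cover n t F" by simp
  then have Fn: "F \<subseteq> {1..n}" and c: "vertex_cover n t F" by (auto simp: minimal_vertex_cover_def vertex_cover_def)
  have "F \<inter> {1..1+t-1} \<noteq> {}" using c t unfolding vertex_cover_def by (metis le_add2 le_add_same_cancel2 le_numeral_extra(4) Nat.add_diff_assoc2 order_refl)
  then have "F \<noteq> {}" by auto
  moreover have "finite F" using Fn by (rule finite_subset) simp
  ultimately interpret sl F "sorted_list_of_set F" n t using t Fn by unfold_locales auto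
  show "F \<in> Cnt n t" using F Cnt_iff by simp
qed



abbreviation "lk \<equiv> Poly_Mapping.lookup"
abbreviation "ks \<equiv> Poly_Mapping.keys"

definition PC :: "nat \<Rightarrow> 'a::comm_ring_1 mpoly set" where
  "PC n = {p. \<forall>m\<in>ks p. ks m \<subseteq> {1..n}}"

lemma carrier_polyring: "carrier (polyring n) = PC n"
  by (simp add: polyring_def PC_def)
lemma polyring_simps[simp]: "carrier (polyring n) = PC n" "mult (polyring n) = (*)"
  "one (polyring n) = 1" "zero (polyring n) = 0" "add (polyring n) = (+)"
  by (simp_all add: polyring_def PC_def)

lemma PC_zero[simp]: "0 \<in> PC n" by (simp add: PC_def)
lemma PC_one[simp]: "(1::'a::comm_ring_1 mpoly) \<in> PC n"
proof -
  have "ks (1::'a mpoly) \<subseteq> {0}" by (simp add: keys_one)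
  then show ?thesis by (auto simp: PC_def)
qed
lemma PC_add[simp]: "p \<in> PC n \<Longrightarrow> q \<in> PC n \<Longrightarrow> p + q \<in> PC n"
  unfolding PC_def using keys_add[of p q] by blast
lemma PC_uminus[simp]: "p \<in> PC n \<Longrightarrow> - p \<in> PC n"
  unfolding PC_def by simp
lemma keys_add_nat: "ks ((a::nat\<Rightarrow>\<^sub>0nat) + b) = ks a \<union> ks b"
  by (auto simp: in_keys_iff lookup_add)
lemma PC_mult[simp]: "p \<in> PC n \<Longrightarrow> q \<in> PC n \<Longrightarrow> p * q \<in> PC n"
  unfolding PC_def using keys_mult[of p q] by (force simp: keys_add_nat)
lemma PC_diff[simp]: "p \<in> PC n \<Longrightarrow> q \<in> PC n \<Longrightarrow> p - q \<in> PC n"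
  using PC_add[of p n "-q"] by simp

lemma cring_polyring: "cring (polyring n :: 'a::comm_ring_1 mpoly ring)"
proof (rule cringI)
  show "abelian_group (polyring n :: 'a mpoly ring)"
    by (rule abelian_groupI) (auto simp: algebra_simps intro!: bexI[of _ "- _"])
  show "comm_monoid (polyring n :: 'a mpoly ring)"
    by (rule comm_monoidI) (auto simp: algebra_simps)
qed (auto simp: algebra_simps)

lemma ring_polyring: "ring (polyring n :: 'a::comm_ring_1 mpoly ring)"
  using cring_polyring cring.axioms(1) by blast

lemma a_inv_polyring: "p \<in> PC n \<Longrightarrow> a_inv (polyring n) p = (- p :: 'a::comm_ring_1 mpoly)"
proof -
  assume p: "p \<in> PC n"
  interpret R: cring "polyring n :: 'a mpoly ring" by (rule cring_polyring)
  show ?thesis by (rule R.minus_equality) (use p in auto)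
qed

lemma keys_Var: "ks (Var i :: 'a::{comm_ring_1} mpoly) = {Poly_Mapping.single i 1}"
  by (simp add: Var_def)

lemma Var_PC: "i \<in> {1..n} \<Longrightarrow> (Var i :: 'a::comm_ring_1 mpoly) \<in> PC n"
  by (simp add: PC_def keys_Var)

definition MI :: "nat \<Rightarrow> nat set \<Rightarrow> 'a::comm_ring_1 mpoly set" where
  "MI n F = {p \<in> PC n. \<forall>m\<in>ks p. \<exists>i\<in>F. lk m i > 0}"

lemma MI_ideal: "ideal (MI n F :: 'a::comm_ring_1 mpoly set) (polyring n)"
proof -
  interpret R: cring "polyring n :: 'a mpoly ring" by (rule cring_polyring)
  have sg: "subgroup (MI n F :: 'a mpoly set) (add_monoid (polyring n))"
  proof (rule R.add.subgroupI)
    show "MI n F \<subseteq> carrier (polyring n)" by (auto simp: MI_def)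
    show "MI n F \<noteq> {}" proof - have "0 \<in> MI n F" by (simp add: MI_def) then show ?thesis by blast qed
  next
    fix a assume a: "a \<in> (MI n F :: 'a mpoly set)"
    then have "a \<in> PC n" by (simp add: MI_def)
    then show "\<ominus>\<^bsub>polyring n\<^esub> a \<in> MI n F" using a a_inv_polyring[of a n] by (simp add: MI_def)
  next
    fix a b :: "'a mpoly" assume "a \<in> MI n F" "b \<in> MI n F"
    then show "a \<oplus>\<^bsub>polyring n\<^esub> b \<in> MI n F"
      using keys_add[of a b] by (auto simp: MI_def)
  qed
  have cl: "x * a \<in> MI n F" if "a \<in> MI n F" "x \<in> PC n" for a x :: "'a mpoly"
  proof -
    have "x * a \<in> PC n" using that by (simp add: MI_def)
    moreover have "\<exists>i\<in>F. lk m i > 0" if "m \<in> ks (x * a)" for m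
    proof -
      obtain m1 m2 where "m = m1 + m2" "m2 \<in> ks a" using keys_mult[of x a] \<open>m \<in> ks (x*a)\<close> by blast
      with \<open>a \<in> MI n F\<close> obtain i where "i \<in> F" "lk m2 i > 0" by (auto simp: MI_def)
      then show ?thesis using \<open>m = m1 + m2\<close> by (auto simp: lookup_add)
    qed
    ultimately show ?thesis by (simp add: MI_def)
  qed
  show ?thesis
  proof (rule idealI[OF R.ring_axioms sg])
    fix a x assume "a \<in> (MI n F :: 'a mpoly set)" "x \<in> carrier (polyring n :: 'a mpoly ring)"
    then show "x \<otimes>\<^bsub>polyring n\<^esub> a \<in> MI n F" "a \<otimes>\<^bsub>polyring n\<^esub> x \<in> MI n F"
      using cl[of a x] by (simp_all add: mult.commute)
  qed
qed

lemma ideal_sum_closed: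
  assumes I: "ideal I (polyring n :: 'a::comm_ring_1 mpoly ring)" and "finite A"
    and "\<And>x. x \<in> A \<Longrightarrow> f x \<in> I"
  shows "sum f A \<in> I"
  using assms(2,3)
proof (induction A rule: finite_induct)
  case empty
  then show ?case using additive_subgroup.zero_closed[OF ideal.axioms(1)[OF I]] by simp
next
  case (insert x A)
  then show ?case using additive_subgroup.a_closed[OF ideal.axioms(1)[OF I], of "f x" "sum f A"] by simp
qed

lemma poly_sum_monomials: "(p::'a::comm_ring_1 mpoly) = (\<Sum>m\<in>ks p. Poly_Mapping.single m (lk p m))"
proof (rule poly_mapping_eqI)
  fix k
  have "lk (\<Sum>m\<in>ks p. Poly_Mapping.single m (lk p m)) k = (\<Sum>m\<in>ks p. lk (Poly_Mapping.single m (lk p m)) k)"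
    by (rule lookup_sum)
  also have "\<dots> = lk p k"
    by (cases "k \<in> ks p") (auto simp: lookup_single when_def in_keys_iff)
  finally show "lk p k = lk (\<Sum>m\<in>ks p. Poly_Mapping.single m (lk p m)) k" by simp
qed

lemma monom_split:
  assumes "lk m i > 0"
  shows "Poly_Mapping.single m (c::'a::comm_ring_1) = Var i * Poly_Mapping.single (m - Poly_Mapping.single i 1) c"
proof -
  have "Poly_Mapping.single i 1 + (m - Poly_Mapping.single i 1) = m"
    by (rule poly_mapping_eqI) (use assms in \<open>auto simp: lookup_add lookup_minus lookup_single when_def\<close>)
  then show ?thesis by (simp add: Var_def mult_single)
qed

lemma keys_sub_nat: "ks ((m::nat\<Rightarrow>\<^sub>0nat) - a) \<subseteq> ks m"
  by (auto simp: in_keys_iff lookup_minus)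

lemma var_ideal_eq:
  assumes F: "F \<subseteq> {1..n}"
  shows "var_ideal n F = (MI n F :: 'a::comm_ring_1 mpoly set)"
proof -
  interpret R: cring "polyring n :: 'a mpoly ring" by (rule cring_polyring)
  have sub: "Var ` F \<subseteq> carrier (polyring n :: 'a mpoly ring)" using F by (auto intro!: Var_PC)
  have VM: "(Var ` F :: 'a mpoly set) \<subseteq> MI n F"
    using F by (auto simp: MI_def keys_Var intro!: Var_PC) (rule_tac x=xa in bexI, simp_all)
  show ?thesis
  proof
    show "var_ideal n F \<subseteq> (MI n F :: 'a mpoly set)"
      unfolding var_ideal_def by (rule R.genideal_minimal[OF MI_ideal VM])
  next
    let ?J = "var_ideal n F :: 'a mpoly set"
    have J: "ideal ?J (polyring n)" unfolding var_ideal_def by (rule R.genideal_ideal[OF sub])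
    have VJ: "Var ` F \<subseteq> ?J" unfolding var_ideal_def by (rule R.genideal_self[OF sub])
    show "MI n F \<subseteq> ?J"
    proof
      fix p :: "'a mpoly" assume p: "p \<in> MI n F"
      have "(\<Sum>m\<in>ks p. Poly_Mapping.single m (lk p m)) \<in> ?J"
      proof (rule ideal_sum_closed[OF J], simp)
        fix m assume m: "m \<in> ks p"
        with p obtain i where i: "i \<in> F" "lk m i > 0" by (auto simp: MI_def)
        have mk: "ks m \<subseteq> {1..n}" using p m by (auto simp: MI_def PC_def)
        have "Poly_Mapping.single (m - Poly_Mapping.single i 1) (lk p m) \<in> PC n"
          using mk keys_sub_nat[of m] by (auto simp: PC_def)
        moreover have "Var i \<in> ?J" using VJ i by auto
        ultimately have "Poly_Mapping.single (m - Poly_Mapping.single i 1) (lk p m) \<otimes>\<^bsub>polyring n\<^esub> Var i \<in> ?J"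
          using ideal.I_l_closed[OF J] by simp
        then show "Poly_Mapping.single m (lk p m) \<in> ?J"
          using monom_split[OF i(2), of "lk p m"] by (simp add: mult.commute)
      qed
      then show "p \<in> ?J" using poly_sum_monomials[of p] by simp
    qed
  qed
qed

lemma Var_in_MI: "(Var k :: 'a::{comm_ring_1} mpoly) \<in> MI n F \<longleftrightarrow> k \<in> F \<and> k \<in> {1..n}"
  by (auto simp: MI_def keys_Var PC_def lookup_single when_def)


lemma MI_add: "a \<in> MI n F \<Longrightarrow> b \<in> MI n F \<Longrightarrow> a + b \<in> MI n F"
  using keys_add[of a b] by (auto simp: MI_def)
lemma MI_uminus: "a \<in> MI n F \<Longrightarrow> - a \<in> MI n F"
  by (auto simp: MI_def)
lemma MI_mult: "a \<in> MI n F \<Longrightarrow> x \<in> PC n \<Longrightarrow> x * a \<in> MI n F"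
proof -
  assume a: "a \<in> MI n F" and x: "x \<in> PC n"
  have "x * a \<in> PC n" using a x by (simp add: MI_def)
  moreover have "\<exists>i\<in>F. lk m i > 0" if "m \<in> ks (x * a)" for m
  proof -
    obtain m1 m2 where "m = m1 + m2" "m2 \<in> ks a" using keys_mult[of x a] \<open>m \<in> ks (x*a)\<close> by blast
    with a obtain i where "i \<in> F" "lk m2 i > 0" by (auto simp: MI_def)
    then show ?thesis using \<open>m = m1 + m2\<close> by (auto simp: lookup_add)
  qed
  ultimately show ?thesis by (simp add: MI_def)
qed

definition avoid :: "nat set \<Rightarrow> (nat \<Rightarrow>\<^sub>0 nat) \<Rightarrow> bool" where
  "avoid F m \<longleftrightarrow> (\<forall>i\<in>F. lk m i = 0)"

definition low :: "nat set \<Rightarrow> 'a::comm_ring_1 mpoly \<Rightarrow> 'a mpoly" where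
  "low F a = (\<Sum>m\<in>{m\<in>ks a. avoid F m}. Poly_Mapping.single m (lk a m))"

lemma lookup_low: "lk (low F a) k = (if avoid F k then lk a k else 0)"
proof -
  have "lk (low F a) k = (\<Sum>m\<in>{m\<in>ks a. avoid F m}. lk (Poly_Mapping.single m (lk a m)) k)"
    unfolding low_def by (rule lookup_sum)
  also have "\<dots> = (\<Sum>m\<in>{m\<in>ks a. avoid F m}. if m = k then lk a m else 0)"
    by (rule sum.cong) (auto simp: lookup_single when_def)
  also have "\<dots> = (if avoid F k then lk a k else 0)"
    by (auto simp: in_keys_iff)
  finally show ?thesis .
qed

lemma keys_low: "m \<in> ks (low F a) \<Longrightarrow> m \<in> ks a \<and> avoid F m"
  by (auto simp: in_keys_iff lookup_low split: if_splits)

lemma MI_prime: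
  assumes F: "F \<subseteq> {1..n}"
  shows "primeideal (MI n F :: 'a::field mpoly set) (polyring n)"
proof (rule primeidealI[OF MI_ideal cring_polyring])
  have "(1::'a mpoly) \<notin> MI n F" by (auto simp: MI_def keys_one)
  then show "carrier (polyring n) \<noteq> (MI n F :: 'a mpoly set)" by auto
next
  fix a b :: "'a mpoly"
  assume a: "a \<in> carrier (polyring n)" and b: "b \<in> carrier (polyring n)"
    and ab: "a \<otimes>\<^bsub>polyring n\<^esub> b \<in> MI n F"
  have aP: "a \<in> PC n" and bP: "b \<in> PC n" and abM: "a * b \<in> MI n F" using a b ab by auto
  have lowP: "low F p \<in> PC n" if "p \<in> PC n" for p :: "'a mpoly"
    using that keys_low[of _ F p] by (auto simp: PC_def)
  have restM: "p - low F p \<in> MI n F" if "p \<in> PC n" for p :: "'a mpoly"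
  proof -
    have "p - low F p \<in> PC n" using that lowP by simp
    moreover have "\<exists>i\<in>F. lk m i > 0" if "m \<in> ks (p - low F p)" for m
      using that by (auto simp: in_keys_iff lookup_minus lookup_low avoid_def split: if_splits)
    ultimately show ?thesis by (simp add: MI_def)
  qed
  have lowne: "low F p \<noteq> 0" if "p \<in> PC n" "p \<notin> MI n F" for p :: "'a mpoly"
  proof -
    from that obtain m where m: "m \<in> ks p" "avoid F m" by (auto simp: MI_def avoid_def)
    then have "lk (low F p) m \<noteq> 0" by (simp add: lookup_low in_keys_iff)
    then show ?thesis by auto
  qed
  show "a \<in> MI n F \<or> b \<in> MI n F"
  proof (rule ccontr)
    assume "\<not> (a \<in> MI n F \<or> b \<in> MI n F)"
    then have n0: "low F a * low F b \<noteq> 0" using lowne aP bP by simp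
    have eq: "low F a * low F b = a * b + (- ((a - low F a) * b + low F a * (b - low F b)))"
      by (simp add: algebra_simps)
    have "(a - low F a) * b \<in> MI n F" using MI_mult[OF restM[OF aP] bP] by (simp add: mult.commute)
    moreover have "low F a * (b - low F b) \<in> MI n F" using MI_mult[OF restM[OF bP] lowP[OF aP]] .
    ultimately have "low F a * low F b \<in> MI n F"
      unfolding eq by (intro MI_add abM MI_uminus)
    moreover obtain m where "m \<in> ks (low F a * low F b)" using n0 by (metis keys_eq_empty ex_in_conv)
    ultimately obtain i where i: "i \<in> F" "lk m i > 0" by (auto simp: MI_def)
    obtain m1 m2 where "m = m1 + m2" "m1 \<in> ks (low F a)" "m2 \<in> ks (low F b)"
      using keys_mult \<open>m \<in> ks (low F a * low F b)\<close> by blast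
    then have "avoid F m1" "avoid F m2" using keys_low by blast+
    then show False using i \<open>m = m1 + m2\<close> by (auto simp: avoid_def lookup_add)
  qed
qed


lemma prod_Var_PC: "finite S \<Longrightarrow> S \<subseteq> {1..n} \<Longrightarrow> prod Var S \<in> (PC n :: 'a::comm_ring_1 mpoly set)"
  by (induction S rule: finite_induct) (auto intro!: Var_PC PC_mult)

lemma prime_prod:
  assumes P: "primeideal P (polyring n :: 'a::comm_ring_1 mpoly ring)"
  shows "finite S \<Longrightarrow> S \<noteq> {} \<Longrightarrow> S \<subseteq> {1..n} \<Longrightarrow> prod Var S \<in> P \<Longrightarrow> \<exists>k\<in>S. Var k \<in> P"
proof (induction S rule: finite_ne_induct)
  case (singleton x)
  then show ?case by simp
next
  case (insert x S)
  have "Var x * prod Var S \<in> P" using insert by simp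
  moreover have "Var x \<in> carrier (polyring n :: 'a mpoly ring)" using insert by (auto intro!: Var_PC)
  moreover have "prod Var S \<in> carrier (polyring n :: 'a mpoly ring)" using insert by (auto intro!: prod_Var_PC)
  ultimately have "Var x \<in> P \<or> prod Var S \<in> P" using primeideal.I_prime[OF P] by fastforce
  then show ?case using insert by auto
qed

definition gens :: "nat \<Rightarrow> nat \<Rightarrow> 'a::comm_ring_1 mpoly set" where
  "gens n t = {path_gen t i | i. 1 \<le> i \<and> i \<le> n - t + 1}"

lemma gens_PC: "1 \<le> t \<Longrightarrow> t \<le> n \<Longrightarrow> gens n t \<subseteq> (PC n :: 'a::comm_ring_1 mpoly set)"
  by (auto simp: gens_def path_gen_def intro!: prod_Var_PC)

lemma path_ideal_sub:
  assumes "1 \<le> t" "t \<le> n" "ideal Q (polyring n :: 'a::comm_ring_1 mpoly ring)"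
  shows "path_ideal n t \<subseteq> Q \<longleftrightarrow> gens n t \<subseteq> Q"
proof -
  interpret R: cring "polyring n :: 'a mpoly ring" by (rule cring_polyring)
  show ?thesis unfolding path_ideal_def gens_def[symmetric]
    by (rule R.Idl_subset_ideal[OF assms(3)]) (use gens_PC[OF assms(1,2)] in simp)
qed

definition Fset :: "nat \<Rightarrow> 'a::comm_ring_1 mpoly set \<Rightarrow> nat set" where
  "Fset n Q = {k \<in> {1..n}. Var k \<in> Q}"

lemma Fset_cover:
  assumes t: "1 \<le> t" "t \<le> n" and Q: "primeideal Q (polyring n :: 'a::comm_ring_1 mpoly ring)"
    and sub: "path_ideal n t \<subseteq> Q"
  shows "vertex_cover n t (Fset n Q)"
proof -
  have g: "gens n t \<subseteq> Q" using path_ideal_sub[OF t primeideal.axioms(1)[OF Q]] sub by simp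
  show ?thesis unfolding vertex_cover_def
  proof (intro conjI allI impI)
    show "Fset n Q \<subseteq> {1..n}" by (auto simp: Fset_def)
    fix i assume i: "1 \<le> i \<and> i \<le> n - t + 1"
    then have "prod Var {i..i+t-1} \<in> Q" using g by (auto simp: gens_def path_gen_def)
    moreover have "i + t - 1 \<le> n" "i \<le> i + t - 1" using i t by auto
    ultimately obtain k where "k \<in> {i..i+t-1}" "Var k \<in> Q"
      using prime_prod[OF Q, of "{i..i+t-1}"] i by auto
    moreover have "k \<in> {1..n}" using calculation i t by auto
    ultimately have "k \<in> Fset n Q \<inter> {i..i+t-1}" by (auto simp: Fset_def)
    then show "Fset n Q \<inter> {i..i+t-1} \<noteq> {}" by blast
  qed
qed

lemma cover_path_MI:
  assumes t: "1 \<le> t" "t \<le> n" and G: "vertex_cover n t G"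
  shows "path_ideal n t \<subseteq> (MI n G :: 'a::comm_ring_1 mpoly set)"
proof -
  have "gens n t \<subseteq> (MI n G :: 'a mpoly set)"
  proof
    fix p :: "'a mpoly" assume "p \<in> gens n t"
    then obtain i where i: "1 \<le> i" "i \<le> n - t + 1" "p = prod Var {i..i+t-1}"
      by (auto simp: gens_def path_gen_def)
    have "G \<inter> {i..i+t-1} \<noteq> {}" using G i by (auto simp: vertex_cover_def)
    then obtain k where k: "k \<in> G" "k \<in> {i..i+t-1}" by blast
    have kn: "k \<in> {1..n}" using k i t by auto
    have "p = prod Var ({i..i+t-1} - {k}) * Var k"
      using i(3) k(2) by (simp add: prod.remove mult.commute)
    moreover have "prod Var ({i..i+t-1} - {k}) \<in> (PC n :: 'a mpoly set)"
      using i t by (intro prod_Var_PC) auto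
    moreover have "(Var k :: 'a mpoly) \<in> MI n G" using k kn Var_in_MI by blast
    ultimately show "p \<in> MI n G" using MI_mult by metis
  qed
  then show ?thesis using path_ideal_sub[OF t MI_ideal] by blast
qed

lemma MI_sub_ideal:
  assumes "G \<subseteq> {1..n}" "ideal Q (polyring n)" "(Var ` G :: 'a::comm_ring_1 mpoly set) \<subseteq> Q"
  shows "(MI n G :: 'a mpoly set) \<subseteq> Q"
proof -
  interpret R: cring "polyring n :: 'a mpoly ring" by (rule cring_polyring)
  show ?thesis using var_ideal_eq[OF assms(1), where 'a='a] R.genideal_minimal[OF assms(2,3)]
    by (simp add: var_ideal_def)
qed

lemma exists_min_cover:
  assumes "vertex_cover n t C"
  shows "\<exists>G\<subseteq>C. minimal_vertex_cover n t G"
proof -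
  obtain G where G: "G \<subseteq> C \<and> vertex_cover n t G"
    and mn: "\<And>D. D \<subseteq> C \<and> vertex_cover n t D \<Longrightarrow> card G \<le> card D"
    using ex_has_least_nat[of "\<lambda>G. G \<subseteq> C \<and> vertex_cover n t G" C card] assms by blast
  have "finite G" using G by (auto simp: vertex_cover_def intro: finite_subset)
  have "\<not> vertex_cover n t D" if "D \<subset> G" for D
  proof
    assume "vertex_cover n t D"
    then have "card G \<le> card D" using mn that G by blast
    moreover have "card D < card G" using psubset_card_mono[OF \<open>finite G\<close> that] .
    ultimately show False by simp
  qed
  then show ?thesis using G by (auto simp: minimal_vertex_cover_def)
qed

theorem alg_part:
  assumes t: "1 \<le> t" "t \<le> n"
  shows "{P. minimal_prime (polyring n :: ('a::field) mpoly ring) (path_ideal n t) P}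
           = var_ideal n ` {F. minimal_vertex_cover n t F}"
proof
  show "{P. minimal_prime (polyring n :: 'a mpoly ring) (path_ideal n t) P} \<subseteq> var_ideal n ` {F. minimal_vertex_cover n t F}"
  proof
    fix P :: "'a mpoly set" assume "P \<in> {P. minimal_prime (polyring n) (path_ideal n t) P}"
    then have Pp: "primeideal P (polyring n)" and PI: "path_ideal n t \<subseteq> P"
      and Pm: "\<And>Q. primeideal Q (polyring n) \<and> path_ideal n t \<subseteq> Q \<and> Q \<subseteq> P \<Longrightarrow> Q = P"
      by (auto simp: minimal_prime_def)
    obtain G where G: "G \<subseteq> Fset n P" "minimal_vertex_cover n t G"
      using exists_min_cover[OF Fset_cover[OF t Pp PI]] by blast
    have Gn: "G \<subseteq> {1..n}" using G by (auto simp: minimal_vertex_cover_def vertex_cover_def)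
    have "(MI n G :: 'a mpoly set) \<subseteq> P"
      using G(1) by (intro MI_sub_ideal[OF Gn primeideal.axioms(1)[OF Pp]]) (auto simp: Fset_def)
    moreover have "primeideal (MI n G :: 'a mpoly set) (polyring n)" by (rule MI_prime[OF Gn])
    moreover have "path_ideal n t \<subseteq> (MI n G :: 'a mpoly set)"
      using G(2) cover_path_MI[OF t] by (auto simp: minimal_vertex_cover_def)
    ultimately have "MI n G = P" using Pm by blast
    then show "P \<in> var_ideal n ` {F. minimal_vertex_cover n t F}"
      using G(2) var_ideal_eq[OF Gn] by auto
  qed
next
  show "var_ideal n ` {F. minimal_vertex_cover n t F} \<subseteq> {P. minimal_prime (polyring n :: 'a mpoly ring) (path_ideal n t) P}"
  proof
    fix P :: "'a mpoly set" assume "P \<in> var_ideal n ` {F. minimal_vertex_cover n t F}"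
    then obtain G where G: "minimal_vertex_cover n t G" and P: "P = var_ideal n G" by auto
    have Gn: "G \<subseteq> {1..n}" using G by (auto simp: minimal_vertex_cover_def vertex_cover_def)
    have PM: "P = MI n G" using P var_ideal_eq[OF Gn] by simp
    have Pp: "primeideal P (polyring n)" unfolding PM by (rule MI_prime[OF Gn])
    have PI: "path_ideal n t \<subseteq> P"
      unfolding PM using G cover_path_MI[OF t] by (auto simp: minimal_vertex_cover_def)
    have "Q = P" if Q: "primeideal Q (polyring n)" "path_ideal n t \<subseteq> Q" "Q \<subseteq> P" for Q
    proof -
      have c: "vertex_cover n t (Fset n Q)" by (rule Fset_cover[OF t Q(1,2)])
      have "Fset n Q \<subseteq> G" using Q(3) unfolding PM by (auto simp: Fset_def Var_in_MI)
      then have "Fset n Q = G" using G c by (auto simp: minimal_vertex_cover_def)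
      then have "MI n G \<subseteq> Q"
        by (intro MI_sub_ideal[OF Gn primeideal.axioms(1)[OF Q(1)]]) (auto simp: Fset_def)
      then show ?thesis using Q(3) PM by auto
    qed
    then show "P \<in> {P. minimal_prime (polyring n) (path_ideal n t) P}"
      using Pp PI by (auto simp: minimal_prime_def)
  qed
qed


theorem theorem2p7:
  fixes n t :: nat
  assumes "1 \<le> t" and "t \<le> n"
  shows "{P. minimal_prime (polyring n :: ('a::field) mpoly ring) (path_ideal n t) P}
           = var_ideal n ` Cnt n t
         \<and> Cnt n t = {F. minimal_vertex_cover n t F}"
  using alg_part[OF assms, where 'a='a] Cnt_eq[OF assms] by simp

end
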